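(* Let $G$ be a graph with $n\geq 1$ vertices, $m$ edges, and maximum degree at most $\Delta$, where $\Delta$ is a positive integer. Then $$irr(G)\leq \frac{(\Delta n-2m)\Delta m}{\Delta n-m}<\left(3-2\sqrt{2}\right)\Delta^2 n.$$
   Context: All graphs are finite, simple and undirected. For a graph $G$ with edge set $E(G)$ and vertex degrees $d_G(u)$, the irregularity (in the sense of Albertson) is $irr(G)=\sum_{uv\in E(G)}|d_G(u)-d_G(v)|$. *)

theory Defs
  imports Complex_Main
begin

definition simple_graph :: "'a set \<Rightarrow> 'a set set \<Rightarrow> bool" where
  "simple_graph V E \<longleftrightarrow> finite V \<and> (\<forall>e\<in>E. e \<subseteq> V \<and> card e = 2)"

definition degree :: "'a set set \<Rightarrow> 'a \<Rightarrow> nat" where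
  "degree E v = card {e \<in> E. v \<in> e}"

definition irr :: "'a set set \<Rightarrow> nat" where
  "irr E = (\<Sum>e\<in>E. THE k. \<exists>u v. e = {u, v} \<and> u \<noteq> v \<and>
                 k = nat \<bar>int (degree E u) - int (degree E v)\<bar>)"

end

theory Submission
  imports Defs
begin

lemma two_sq_nat: "2 * k^2 = (j::nat)^2 \<Longrightarrow> k = 0"
proof (induction j arbitrary: k rule: less_induct)
  case (less j)
  have "even (j^2)" using less.prems by (metis dvd_triv_left)
  then have "even j" by simp
  then obtain j' where j': "j = 2*j'" by blast
  have "k^2 = 2*j'^2" using less.prems j' by (simp add: power2_eq_square)
  then have "even (k^2)" by simp
  then have "even k" by simp
  then obtain k' where k': "k = 2*k'" by blast
  have e: "2*k'^2 = j'^2" using less.prems j' k' by (simp add: power2_eq_square)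
  show ?case
  proof (cases "j = 0")
    case True then show ?thesis using less.prems by simp
  next
    case False
    then have "j' < j" using j' by simp
    then have "k' = 0" using less.IH e by blast
    then show ?thesis using k' by simp
  qed
qed

lemma sqrt2_ne: assumes "(p::nat) > 0" shows "sqrt 2 * real p \<noteq> real q"
proof
  assume h: "sqrt 2 * real p = real q"
  then have "(sqrt 2 * real p)^2 = (real q)^2" by simp
  then have "2 * (real p)^2 = (real q)^2" by (simp add: power_mult_distrib)
  then have "real (2 * p^2) = real (q^2)" by simp
  then have "2*p^2 = q^2" by (simp only: of_nat_eq_iff)
  then have "p = 0" by (rule two_sq_nat)
  then show False using assms by simp
qed

lemma double_count:
  assumes "finite V" "\<forall>e\<in>E. e \<subseteq> V" "finite E"
  shows "(\<Sum>e\<in>E. \<Sum>v\<in>e. f v) = (\<Sum>v\<in>V. real (degree E v) * (f v :: real))"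
proof -
  have "(\<Sum>e\<in>E. \<Sum>v\<in>e. f v) = (\<Sum>e\<in>E. \<Sum>v\<in>V. if v \<in> e then f v else 0)"
  proof (rule sum.cong[OF refl])
    fix e assume "e \<in> E"
    then have "e \<subseteq> V" using assms by blast
    then have "e = V \<inter> e" by blast
    then show "(\<Sum>v\<in>e. f v) = (\<Sum>v\<in>V. if v \<in> e then f v else 0)"
      using sum.inter_restrict[OF assms(1), of f e] by (simp add: Int_commute)
  qed
  also have "\<dots> = (\<Sum>v\<in>V. \<Sum>e\<in>E. if v \<in> e then f v else 0)" by (rule sum.swap)
  also have "\<dots> = (\<Sum>v\<in>V. real (degree E v) * f v)"
  proof (rule sum.cong[OF refl])
    fix v
    have "(\<Sum>e\<in>E. if v \<in> e then f v else 0) = (\<Sum>e\<in>{e\<in>E. v\<in>e}. f v)"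
      using sum.inter_filter[OF assms(3), of "\<lambda>_. f v" "\<lambda>e. v \<in> e"] by simp
    then show "(\<Sum>e\<in>E. if v \<in> e then f v else 0) = real (degree E v) * f v"
      by (simp add: degree_def)
  qed
  finally show ?thesis .
qed

theorem corollary1:
  fixes V :: "'a set" and E :: "'a set set" and \<Delta> :: nat
  assumes "simple_graph V E"
    and "card V \<ge> 1"
    and "\<Delta> \<ge> 1"
    and "\<forall>v\<in>V. degree E v \<le> \<Delta>"
  shows "real (irr E) \<le>
           (real \<Delta> * real (card V) - 2 * real (card E)) * real \<Delta> * real (card E)
             / (real \<Delta> * real (card V) - real (card E))
       \<and> (real \<Delta> * real (card V) - 2 * real (card E)) * real \<Delta> * real (card E)
             / (real \<Delta> * real (card V) - real (card E))
           < (3 - 2 * sqrt 2) * (real \<Delta>)\<^sup>2 * real (card V)"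
proof -
  define n where "n = real (card V)"
  define m where "m = real (card E)"
  define D where "D = real \<Delta>"
  have finV: "finite V" and Esub: "\<forall>e\<in>E. e \<subseteq> V" and Ecard: "\<forall>e\<in>E. card e = 2"
    using assms(1) unfolding simple_graph_def by auto
  have finE: "finite E"
    using Esub finV by (intro finite_subset[of E "Pow V"]) auto
  have n1: "n \<ge> 1" using assms(2) n_def by simp
  have D1: "D \<ge> 1" using assms(3) D_def by simp
  have m0: "m \<ge> 0" using m_def by simp
  define T where "T e = real (THE k. \<exists>u v. e = {u, v} \<and> u \<noteq> v \<and>
                 k = nat \<bar>int (degree E u) - int (degree E v)\<bar>)" for e
  define A where "A e = real (Min (degree E ` e))" for e
  define f where "f v = 1 / real (degree E v)" for v
  have edge: "A e \<ge> 1 \<and> T e \<le> D - A e \<and> 1 / A e + 1 / D \<le> (\<Sum>w\<in>e. f w)" if eE: "e \<in> E" for e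
  proof -
    obtain u v where e: "e = {u,v}" and uv: "u \<noteq> v"
    proof -
      have "card e = 2" using Ecard eE by blast
      then show ?thesis using that by (auto simp: card_2_iff)
    qed
    have uV: "u \<in> V" and vV: "v \<in> V" using Esub eE e by auto
    have du1: "degree E u \<ge> 1"
    proof -
      have "e \<in> {e\<in>E. u\<in>e}" using eE e by auto
      then have "card {e\<in>E. u\<in>e} > 0" using finE by (subst card_gt_0_iff) auto
      then show ?thesis unfolding degree_def by simp
    qed
    have dv1: "degree E v \<ge> 1"
    proof -
      have "e \<in> {e\<in>E. v\<in>e}" using eE e by auto
      then have "card {e\<in>E. v\<in>e} > 0" using finE by (subst card_gt_0_iff) auto
      then show ?thesis unfolding degree_def by simp
    qed
    have duD: "degree E u \<le> \<Delta>" and dvD: "degree E v \<le> \<Delta>" using assms(4) uV vV by auto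
    have Te: "T e = real (nat \<bar>int (degree E u) - int (degree E v)\<bar>)"
      unfolding T_def
    proof (rule arg_cong[where f=real], rule the_equality)
      show "\<exists>u' v'. e = {u', v'} \<and> u' \<noteq> v' \<and>
         nat \<bar>int (degree E u) - int (degree E v)\<bar> = nat \<bar>int (degree E u') - int (degree E v')\<bar>"
        using e uv by blast
    next
      fix k assume "\<exists>u' v'. e = {u', v'} \<and> u' \<noteq> v' \<and> k = nat \<bar>int (degree E u') - int (degree E v')\<bar>"
      then obtain u' v' where "e = {u',v'}" "k = nat \<bar>int (degree E u') - int (degree E v')\<bar>" by blast
      then show "k = nat \<bar>int (degree E u) - int (degree E v)\<bar>" using e
        by (auto simp: doubleton_eq_iff abs_minus_commute)
    qed
    have Ae: "A e = real (min (degree E u) (degree E v))" unfolding A_def e by simp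
    have fs: "(\<Sum>w\<in>e. f w) = f u + f v" by (simp add: e uv)
    define a where "a = real (degree E u)"
    define b where "b = real (degree E v)"
    have a1: "a \<ge> 1" "b \<ge> 1" "a \<le> D" "b \<le> D" using du1 dv1 duD dvD a_def b_def D_def by auto
    have Te': "T e = \<bar>a - b\<bar>" unfolding Te a_def b_def by simp
    have Ae': "A e = min a b" unfolding Ae a_def b_def by simp
    have fs': "(\<Sum>w\<in>e. f w) = 1/a + 1/b" using fs by (simp add: f_def a_def b_def)
    have "1 / max a b \<ge> 1 / D" using a1 by (simp add: frac_le)
    moreover have "1/a + 1/b = 1 / min a b + 1 / max a b" by (simp add: min_def max_def)
    ultimately have "1 / A e + 1 / D \<le> (\<Sum>w\<in>e. f w)" unfolding Ae' fs' by linarith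
    moreover have "T e \<le> D - A e" using Te' Ae' a1 by auto
    moreover have "A e \<ge> 1" using Ae' a1 by simp
    ultimately show ?thesis by blast
  qed
  define S where "S = (\<Sum>e\<in>E. A e)"
  define H where "H = (\<Sum>e\<in>E. 1 / A e)"
  have irrT: "real (irr E) = (\<Sum>e\<in>E. T e)" unfolding irr_def T_def by simp
  have I1: "real (irr E) \<le> D*m - S"
  proof -
    have "(\<Sum>e\<in>E. T e) \<le> (\<Sum>e\<in>E. D - A e)" by (rule sum_mono) (use edge in blast)
    also have "\<dots> = D*m - S" by (simp add: sum_subtractf S_def m_def)
    finally show ?thesis using irrT by simp
  qed
  have H1: "H + m / D \<le> n"
  proof -
    have "(\<Sum>e\<in>E. 1 / A e + 1 / D) \<le> (\<Sum>e\<in>E. \<Sum>w\<in>e. f w)" by (rule sum_mono) (use edge in blast)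
    also have "\<dots> = (\<Sum>v\<in>V. real (degree E v) * f v)" by (rule double_count[OF finV Esub finE])
    also have "\<dots> \<le> (\<Sum>v\<in>V. 1)" by (rule sum_mono) (simp add: f_def)
    finally show ?thesis by (simp add: sum.distrib H_def m_def n_def)
  qed
  have hs: "2*m \<le> D*n"
  proof -
    have "(\<Sum>e\<in>E. \<Sum>w\<in>e. (1::real)) = (\<Sum>v\<in>V. real (degree E v) * 1)"
      by (rule double_count[OF finV Esub finE])
    also have "\<dots> \<le> (\<Sum>v\<in>V. D)" by (rule sum_mono) (use assms(4) D_def in auto)
    also have "(\<Sum>e\<in>E. \<Sum>w\<in>e. (1::real)) = (\<Sum>e\<in>E. 2)" using Ecard by simp
    finally show ?thesis by (simp add: m_def n_def mult.commute)
  qed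
  have P: "D*n - m > 0"
  proof -
    have "1*1 \<le> D*n" using D1 n1 by (intro mult_mono) auto
    then show ?thesis using hs by linarith
  qed
  define L where "L = D*m / (D*n - m)"
  have L0: "L \<ge> 0" using P m0 D1 L_def by simp
  have S1: "S \<ge> 2*L*m - L^2*H"
  proof -
    have "(\<Sum>e\<in>E. 2*L - L^2 * (1/A e)) \<le> S" unfolding S_def
    proof (rule sum_mono)
      fix e assume "e \<in> E"
      then have a: "A e \<ge> 1" using edge by blast
      have "(A e - L)^2 / A e \<ge> 0" using a by simp
      moreover have "(A e - L)^2 / A e = A e - 2*L + L^2 * (1 / A e)" using a
        by (simp add: field_simps power2_eq_square)
      ultimately show "2*L - L^2 * (1/A e) \<le> A e" by linarith
    qed
    moreover have "(\<Sum>e\<in>E. 2*L - L^2 * (1/A e)) = (\<Sum>e\<in>E. 2*L) - (\<Sum>e\<in>E. L^2 * (1/A e))"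
      by (rule sum_subtractf)
    moreover have "(\<Sum>e\<in>E. L^2 * (1/A e)) = L^2 * H" by (simp only: H_def sum_distrib_left)
    moreover have "(\<Sum>e\<in>E. 2*L) = 2*L*m" by (simp add: m_def)
    ultimately show ?thesis by linarith
  qed
  have "L^2*H \<le> L^2*(n - m/D)" using H1 by (intro mult_left_mono) auto
  also have "L^2*(n - m/D) = L * m"
  proof -
    have LQ: "L * (D*n - m) = D*m" unfolding L_def using P by simp
    have "L^2*(n - m/D) = L * (L*(D*n - m)) / D" using D1
      by (simp add: power2_eq_square field_simps)
    also have "\<dots> = L*m" using LQ D1 by simp
    finally show ?thesis .
  qed
  finally have "S \<ge> L*m" using S1 by linarith
  then have "real (irr E) \<le> D*m - L*m" using I1 by linarith
  also have "D*m - L*m = (D*n - 2*m) * D * m / (D*n - m)" unfolding L_def using P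
    by (simp add: field_simps)
  finally have part1: "real (irr E) \<le> (D*n - 2*m) * D * m / (D*n - m)" .
  have part2: "(D*n - 2*m) * D * m / (D*n - m) < (3 - 2*sqrt 2) * D^2 * n"
  proof -
    define N where "N = D*n"
    have nz: "sqrt 2 * (N - m) \<noteq> N"
    proof -
      have "real (card E) < real (\<Delta> * card V)" using P unfolding D_def n_def m_def by simp
      then have "card E < \<Delta> * card V" by (simp only: of_nat_less_iff)
      then have "sqrt 2 * real (\<Delta> * card V - card E) \<noteq> real (\<Delta> * card V)"
        by (intro sqrt2_ne) simp
      moreover have "real (\<Delta> * card V - card E) = N - m" using \<open>card E < \<Delta> * card V\<close>
        unfolding N_def D_def n_def m_def by (simp add: of_nat_diff)
      ultimately show ?thesis unfolding N_def D_def n_def by simp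
    qed
    have s2: "sqrt 2 * sqrt 2 = 2" by simp
    have "(sqrt 2 * m - (sqrt 2 - 1) * N)^2 > 0"
    proof -
      have "sqrt 2 * m - (sqrt 2 - 1) * N \<noteq> 0" using nz by (auto simp: algebra_simps)
      then show ?thesis by simp
    qed
    moreover have "(sqrt 2 * m - (sqrt 2 - 1) * N)^2 = (3 - 2*sqrt 2) * N * (N - m) - (N - 2*m)*m"
      by (simp add: power2_eq_square algebra_simps s2)
    ultimately have "(N - 2*m)*m < (3 - 2*sqrt 2) * N * (N - m)" by linarith
    then have "(N - 2*m)*m*D < (3 - 2*sqrt 2) * N * (N - m) * D" using D1 by simp
    then have "(D*n - 2*m) * D * m < (3 - 2*sqrt 2) * D^2 * n * (D*n - m)"
      unfolding N_def by (simp add: algebra_simps power2_eq_square)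
    then show ?thesis using P by (simp add: divide_less_eq)
  qed
  show ?thesis using part1 part2 unfolding n_def m_def D_def by simp
qed

end
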